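(* Consider the mean-corrected submatrix detection problem with $1/n\le\rho<1/8$. Let $f(Y)=\sum_{i=1}^n\big(\sum_{j=1}^nY_{ij}\big)^2$. Let $t$ satisfy $0<t\le\min\big\{\frac12\sqrt{\rho n},\ \frac{\sqrt2}{18}(\frac18-\rho)\sqrt n\big\}$ and define $\tau=n^2+t\sqrt2\,n^{3/2}$. If $\lambda\ge\sqrt{\frac{4\sqrt2\,t}{1/8-\rho}}\,(\rho\sqrt n)^{-3/2}$, then $\Pr_{Y\sim\mathbb{Q}_n}\{f(Y)<\tau\}\ge1-\frac1{t^2}$ and $\Pr_{Y\sim\mathbb{P}_n}\{f(Y)>\tau\}\ge1-\frac2{t^2}$.
   Context: Mean-corrected submatrix detection problem: the planted distribution $\mathbb{P}_n$ is the law of $Y=\lambda(vv^\top-\mathbb{E}[vv^\top])+Z$, where $v\in\{0,1\}^n$ has i.i.d. $\mathrm{Bernoulli}(\rho)$ entries and $Z$ is an $n\times n$ matrix with i.i.d. $\mathcal{N}(0,1)$ entries (no symmetry), independent of $v$; the null distribution $\mathbb{Q}_n$ is the law of $Y=Z$; $\lambda\ge0$. *)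

theory Defs
  imports "HOL-Probability.Probability"
begin

text \<open>Matrices Y are functions on index pairs (i,j) with i,j < n (0-based indices);
  vectors v are functions on indices i < n with boolean entries (True = 1).\<close>

definition idx :: "nat \<Rightarrow> (nat \<times> nat) set" where
  "idx n = {..<n} \<times> {..<n}"

text \<open>Noise Z: n x n matrix with i.i.d. N(0,1) entries (no symmetry). This is also the null law Q_n.\<close>
definition null_law :: "nat \<Rightarrow> (nat \<times> nat \<Rightarrow> real) measure" where
  "null_law n = PiM (idx n) (\<lambda>_. density lborel std_normal_density)"

definition spike_law :: "nat \<Rightarrow> real \<Rightarrow> (nat \<Rightarrow> bool) measure" where
  "spike_law n \<rho> = PiM {..<n} (\<lambda>_. measure_pmf (bernoulli_pmf \<rho>))"

definition mean_vvT :: "nat \<Rightarrow> real \<Rightarrow> nat \<Rightarrow> nat \<Rightarrow> real" where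
  "mean_vvT n \<rho> i j = (\<integral>v. of_bool (v i) * of_bool (v j) \<partial>spike_law n \<rho>)"

definition planted_law :: "nat \<Rightarrow> real \<Rightarrow> real \<Rightarrow> (nat \<times> nat \<Rightarrow> real) measure" where
  "planted_law n \<rho> lam =
     distr (spike_law n \<rho> \<Otimes>\<^sub>M null_law n) (PiM (idx n) (\<lambda>_. borel))
       (\<lambda>(v, Z). \<lambda>(i,j)\<in>idx n.
          lam * (of_bool (v i) * of_bool (v j) - mean_vvT n \<rho> i j) + Z (i,j))"

definition row_sum_stat :: "nat \<Rightarrow> (nat \<times> nat \<Rightarrow> real) \<Rightarrow> real" where
  "row_sum_stat n Y = (\<Sum>i<n. (\<Sum>j<n. Y (i,j))^2)"

end

theory Submission
  imports Defs
begin

lemma normal_poly_moments: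
  fixes \<sigma> a :: real assumes s: "0 < \<sigma>"
  shows "integrable lborel (\<lambda>x. normal_density 0 \<sigma> x * (a + x)^2)"
    and "integrable lborel (\<lambda>x. normal_density 0 \<sigma> x * (a + x)^4)"
    and "(\<integral>x. normal_density 0 \<sigma> x * (a + x)^2 \<partial>lborel) = a^2 + \<sigma>^2"
    and "(\<integral>x. normal_density 0 \<sigma> x * (a + x)^4 \<partial>lborel) = a^4 + 6*a^2*\<sigma>^2 + 3*\<sigma>^4"
proof -
  let ?p = "normal_density 0 \<sigma>"
  have I: "integrable lborel (\<lambda>x. ?p x * x^k)" for k
    using integrable_normal_moment[OF s, of 0 k] by simp
  have I0: "integrable lborel ?p" using I[of 0] by simp
  have I1: "integrable lborel (\<lambda>x. ?p x * x)" using I[of 1] by simp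
  have m0: "(\<integral>x. ?p x \<partial>lborel) = 1" using integral_normal_density[OF s] by simp
  have m1: "(\<integral>x. ?p x * x^1 \<partial>lborel) = 0"
    using integral_normal_moment_odd[OF s, of 0 0] by simp
  have m3: "(\<integral>x. ?p x * x^3 \<partial>lborel) = 0"
    using integral_normal_moment_odd[OF s, of 0 1] by simp
  have m2: "(\<integral>x. ?p x * x^2 \<partial>lborel) = \<sigma>^2"
    using integral_normal_moment_even[OF s, of 0 1] s by (simp add: field_simps power2_eq_square mult.assoc)
  have m4: "(\<integral>x. ?p x * x^4 \<partial>lborel) = 3*\<sigma>^4"
    using integral_normal_moment_even[OF s, of 0 2] s by (simp add: field_simps fact_numeral power2_eq_square eval_nat_numeral mult.assoc)
  have e2: "(\<lambda>x. ?p x * (a + x)^2) = (\<lambda>x. a^2 * ?p x + 2*a * (?p x * x^1) + ?p x * x^2)"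
    by (auto simp: fun_eq_iff power2_eq_square algebra_simps)
  have e4: "(\<lambda>x. ?p x * (a + x)^4) = (\<lambda>x. a^4 * ?p x + 4*a^3 * (?p x * x^1) + 6*a^2*(?p x * x^2)
      + 4*a*(?p x * x^3) + ?p x * x^4)"
    by (auto simp: fun_eq_iff power2_eq_square algebra_simps eval_nat_numeral)
  show "integrable lborel (\<lambda>x. ?p x * (a + x)^2)" unfolding e2 using I I0 I1 by (intro Bochner_Integration.integrable_add integrable_mult_right I0 I)
  show "integrable lborel (\<lambda>x. ?p x * (a + x)^4)" unfolding e4 using I I0 I1 by (intro Bochner_Integration.integrable_add integrable_mult_right I0 I)
  show "(\<integral>x. ?p x * (a + x)^2 \<partial>lborel) = a^2 + \<sigma>^2" unfolding e2
    using I I0 I1 m0 m1 m2 by (simp add: Bochner_Integration.integral_add integrable_mult_right I I0 I1)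
  show "(\<integral>x. ?p x * (a + x)^4 \<partial>lborel) = a^4 + 6*a^2*\<sigma>^2 + 3*\<sigma>^4" unfolding e4
    using I I0 I1 m0 m1 m2 m3 m4 by (simp add: Bochner_Integration.integral_add integrable_mult_right I I0 I1)
qed


abbreviation "stdN \<equiv> density lborel std_normal_density"

lemma prob_stdN: "prob_space stdN"
  using prob_space_normal_density[of 1 0] by simp

lemma sets_stdN[simp]: "sets stdN = sets borel" by simp

lemma prob_null: "prob_space (null_law n)"
  unfolding null_law_def by (intro prob_space_PiM prob_stdN)

lemma null_coord_indep:
  assumes "n \<ge> 1"
  shows "prob_space.indep_vars (null_law n) (\<lambda>_. borel) (\<lambda>p Z. Z p) (idx n)"
proof -
  interpret P: prob_space "null_law n" by (rule prob_null)
  interpret PP: product_prob_space "\<lambda>_. stdN" "idx n"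
    by (intro product_prob_spaceI prob_stdN)
  have ne: "idx n \<noteq> {}" using assms by (auto simp: idx_def lessThan_empty_iff)
  have rv: "\<And>p. p \<in> idx n \<Longrightarrow> (\<lambda>Z. Z p) \<in> measurable (null_law n) stdN"
    unfolding null_law_def by (rule measurable_component_singleton)
  have "P.indep_vars (\<lambda>_. stdN) (\<lambda>p Z. Z p) (idx n)"
  proof (subst P.indep_vars_iff_distr_eq_PiM'[OF ne rv], assumption)
    have "distr (null_law n) (PiM (idx n) (\<lambda>_. stdN)) (\<lambda>x. \<lambda>p\<in>idx n. x p)
        = distr (null_law n) (null_law n) (\<lambda>x. x)"
      by (rule distr_cong) (auto simp: null_law_def space_PiM)
    also have "\<dots> = null_law n" by simp
    also have "\<dots> = PiM (idx n) (\<lambda>p. distr (null_law n) stdN (\<lambda>Z. Z p))"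
      unfolding null_law_def
      by (intro PiM_cong refl PP.PiM_component[symmetric]) 
    finally show "distr (null_law n) (PiM (idx n) (\<lambda>_. stdN)) (\<lambda>x. \<lambda>p\<in>idx n. x p)
        = PiM (idx n) (\<lambda>p. distr (null_law n) stdN (\<lambda>Z. Z p))" .
  qed
  then show ?thesis
    by (rule P.indep_vars_compose2[where Y="\<lambda>_ x. x"]) simp
qed

lemma null_coord_distr:
  assumes "p \<in> idx n"
  shows "distributed (null_law n) lborel (\<lambda>Z. Z p) std_normal_density"
proof -
  interpret PP: product_prob_space "\<lambda>_. stdN" "idx n"
    by (intro product_prob_spaceI prob_stdN)
  have "distr (null_law n) lborel (\<lambda>Z. Z p) = distr (null_law n) stdN (\<lambda>Z. Z p)"
    by (rule distr_cong) auto
  also have "\<dots> = stdN" unfolding null_law_def by (rule PP.PiM_component[OF assms])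
  finally show ?thesis unfolding distributed_def
    using assms by (auto simp: null_law_def)
qed


lemma sum_row_eq: "(\<Sum>p\<in>{i}\<times>{..<n}. (x p::real)) = (\<Sum>j<n. x (i,j))"
proof -
  have "{i}\<times>{..<n} = (\<lambda>j. (i,j)) ` {..<n}" by auto
  then show ?thesis by (simp add: sum.reindex inj_on_def)
qed

lemma null_row_indep:
  assumes "n \<ge> 1"
  shows "prob_space.indep_vars (null_law n) (\<lambda>_. borel) (\<lambda>i Z. \<Sum>j<n. Z (i,j)) {..<n}"
proof -
  interpret P: prob_space "null_law n" by (rule prob_null)
  have "P.indep_vars (\<lambda>i. PiM ({i}\<times>{..<n}) (\<lambda>_. borel)) (\<lambda>i \<omega>. restrict (\<lambda>p. \<omega> p) ({i}\<times>{..<n})) {..<n}"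
    by (rule P.indep_vars_restrict[OF null_coord_indep[OF assms]])
       (auto simp: idx_def disjoint_family_on_def)
  then have "P.indep_vars (\<lambda>_. borel) (\<lambda>i \<omega>. (\<lambda>f. \<Sum>j<n. f (i,j)) (restrict (\<lambda>p. \<omega> p) ({i}\<times>{..<n}))) {..<n}"
  proof (rule P.indep_vars_compose2)
    fix i assume "i \<in> {..<n}"
    show "(\<lambda>f. \<Sum>j<n. (f (i,j)::real)) \<in> borel_measurable (PiM ({i}\<times>{..<n}) (\<lambda>_. borel))"
      by measurable
  qed
  then show ?thesis by simp
qed

lemma null_row_distr:
  assumes "i < n"
  shows "distributed (null_law n) lborel (\<lambda>Z. \<Sum>j<n. Z (i,j)) (normal_density 0 (sqrt (real n)))"
proof -
  interpret P: prob_space "null_law n" by (rule prob_null)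
  have n: "n \<ge> 1" using assms by simp
  have "distributed (null_law n) lborel (\<lambda>x. \<Sum>p\<in>{i}\<times>{..<n}. x p)
     (normal_density (\<Sum>p\<in>{i}\<times>{..<n}. 0) (sqrt (\<Sum>p\<in>{i}\<times>{..<n}. 1\<^sup>2)))"
    using assms
    by (intro P.sum_indep_normal P.indep_vars_subset[OF null_coord_indep[OF n]] null_coord_distr)
       (auto simp: idx_def)
  then show ?thesis by (simp add: sum_row_eq)
qed


lemma null_row_moments:
  assumes "i < n"
  shows "integrable (null_law n) (\<lambda>Z. (a + (\<Sum>j<n. Z (i,j)))^2)"
    and "integrable (null_law n) (\<lambda>Z. (a + (\<Sum>j<n. Z (i,j)))^4)"
    and "(\<integral>Z. (a + (\<Sum>j<n. Z (i,j)))^2 \<partial>null_law n) = a^2 + real n"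
    and "(\<integral>Z. (a + (\<Sum>j<n. Z (i,j)))^4 \<partial>null_law n) = a^4 + 6*a^2*real n + 3*(real n)^2"
proof -
  have D: "distributed (null_law n) lborel (\<lambda>Z. \<Sum>j<n. Z (i,j)) (normal_density 0 (sqrt (real n)))"
    by (rule null_row_distr[OF assms])
  have s: "0 < sqrt (real n)" using assms by simp
  have s2: "sqrt (real n)^2 = real n" by simp
  have s4: "sqrt (real n)^4 = (real n)^2"
    by (metis s2 power_mult numeral_times_numeral semiring_norm(12) power2_eq_square mult_2_right numeral_Bit0)
  note M = normal_poly_moments[OF s, of a]
  show "integrable (null_law n) (\<lambda>Z. (a + (\<Sum>j<n. Z (i,j)))^2)"
    using distributed_integrable[OF D, of "\<lambda>x. (a + x)^2"] M(1) by simp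
  show "integrable (null_law n) (\<lambda>Z. (a + (\<Sum>j<n. Z (i,j)))^4)"
    using distributed_integrable[OF D, of "\<lambda>x. (a + x)^4"] M(2) by simp
  show "(\<integral>Z. (a + (\<Sum>j<n. Z (i,j)))^2 \<partial>null_law n) = a^2 + real n"
    using distributed_integral[OF D, of "\<lambda>x. (a + x)^2"] M(3) s2 by simp
  show "(\<integral>Z. (a + (\<Sum>j<n. Z (i,j)))^4 \<partial>null_law n) = a^4 + 6*a^2*real n + 3*(real n)^2"
    using distributed_integral[OF D, of "\<lambda>x. (a + x)^4"] M(4) s2 s4 by simp
qed


lemma null_W_cheb:
  fixes a :: "nat \<Rightarrow> real" assumes n: "n \<ge> 1" and s: "s > 0"
  shows "measure (null_law n) {Z \<in> space (null_law n).
      s \<le> \<bar>(\<Sum>i<n. (a i + (\<Sum>j<n. Z (i,j)))^2) - (real n^2 + (\<Sum>i<n. (a i)^2))\<bar>}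
     \<le> (2*real n^3 + 4*real n*(\<Sum>i<n. (a i)^2)) / s^2"
proof -
  interpret P: prob_space "null_law n" by (rule prob_null)
  define X where "X i Z = (a i + (\<Sum>j<n. Z (i,j)))^2" for i Z
  define W where "W Z = (\<Sum>i<n. X i Z)" for Z
  have ind: "P.indep_vars (\<lambda>_. borel) X {..<n}"
    unfolding X_def
    by (rule P.indep_vars_compose2[OF null_row_indep[OF n], where Y="\<lambda>i x. (a i + x)^2"]) simp
  have int1: "integrable (null_law n) (X i)" if "i < n" for i
    unfolding X_def using null_row_moments(1)[OF that] by simp
  have int2: "integrable (null_law n) (\<lambda>Z. X i Z * X i Z)" if "i < n" for i
    unfolding X_def using null_row_moments(2)[OF that, of "a i"]
    by (simp add: power2_eq_square[symmetric] power_mult[symmetric])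
  have E1: "(\<integral>Z. X i Z \<partial>null_law n) = (a i)^2 + real n" if "i < n" for i
    unfolding X_def using null_row_moments(3)[OF that] by simp
  have E2: "(\<integral>Z. X i Z * X i Z \<partial>null_law n) = (a i)^4 + 6*(a i)^2*real n + 3*(real n)^2" if "i < n" for i
    unfolding X_def using null_row_moments(4)[OF that, of "a i"]
    by (simp add: power2_eq_square[symmetric] power_mult[symmetric])
  have pair: "P.indep_var borel (X i) borel (X k)" if "i < n" "k < n" "i \<noteq> k" for i k
  proof -
    have "P.indep_var borel (X i) borel (\<lambda>\<omega>. \<Sum>i\<in>{k}. X i \<omega>)"
      using that by (intro P.indep_vars_sum P.indep_vars_subset[OF ind]) auto
    then show ?thesis by simp
  qed
  have intp: "integrable (null_law n) (\<lambda>Z. X i Z * X k Z)" if "i < n" "k < n" for i k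
  proof (cases "i = k")
    case True then show ?thesis using int2 that by simp
  next
    case False then show ?thesis using P.indep_var_integrable[OF pair[OF that False] int1 int1] that by simp
  qed
  have Ep: "(\<integral>Z. X i Z * X k Z \<partial>null_law n) =
      (if i = k then (a i)^4 + 6*(a i)^2*real n + 3*(real n)^2 else ((a i)^2 + real n) * ((a k)^2 + real n))"
    if "i < n" "k < n" for i k
  proof (cases "i = k")
    case True then show ?thesis using E2 that by simp
  next
    case False then show ?thesis
      using P.indep_var_lebesgue_integral[OF pair[OF that False] int1 int1] that E1 by simp
  qed
  have intW: "integrable (null_law n) W" unfolding W_def using int1 by auto
  have sq: "(W Z)^2 = (\<Sum>i<n. \<Sum>k<n. X i Z * X k Z)" for Z
    unfolding W_def power2_eq_square by (simp add: sum_product)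
  have intW2: "integrable (null_law n) (\<lambda>Z. (W Z)^2)" unfolding sq by (intro Bochner_Integration.integrable_sum) (auto intro: intp)
  have EW: "(\<integral>Z. W Z \<partial>null_law n) = real n^2 + (\<Sum>i<n. (a i)^2)"
    unfolding W_def using int1 E1 by (simp add: sum.distrib power2_eq_square)
  have EW2: "(\<integral>Z. (W Z)^2 \<partial>null_law n) = (\<Sum>i<n. \<Sum>k<n.
      (if i = k then (a i)^4 + 6*(a i)^2*real n + 3*(real n)^2 else ((a i)^2 + real n) * ((a k)^2 + real n)))"
    unfolding sq
    by (subst Bochner_Integration.integral_sum, auto intro!: Bochner_Integration.integrable_sum intp,
        intro sum.cong refl, subst Bochner_Integration.integral_sum, auto intro!: intp simp: Ep)
  have EWsq: "(real n^2 + (\<Sum>i<n. (a i)^2))^2 = (\<Sum>i<n. \<Sum>k<n. ((a i)^2 + real n) * ((a k)^2 + real n))"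
  proof -
    have "real n^2 + (\<Sum>i<n. (a i)^2) = (\<Sum>i<n. (a i)^2 + real n)"
      by (simp add: sum.distrib power2_eq_square)
    then show ?thesis by (simp add: power2_eq_square sum_product)
  qed
  have var: "P.variance W = 2*real n^3 + 4*real n*(\<Sum>i<n. (a i)^2)"
  proof -
    have "P.variance W = (\<integral>Z. (W Z)^2 \<partial>null_law n) - (\<integral>Z. W Z \<partial>null_law n)^2"
      by (rule P.variance_eq[OF intW intW2])
    also have "\<dots> = (\<Sum>i<n. \<Sum>k<n.
      (if i = k then (a i)^4 + 6*(a i)^2*real n + 3*(real n)^2 else ((a i)^2 + real n) * ((a k)^2 + real n))
        - ((a i)^2 + real n) * ((a k)^2 + real n))"
      unfolding EW2 EW EWsq by (simp add: sum_subtractf)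
    also have "\<dots> = (\<Sum>i<n. (a i)^4 + 6*(a i)^2*real n + 3*(real n)^2 - ((a i)^2 + real n) * ((a i)^2 + real n))"
      by (simp add: if_distrib[where f="\<lambda>x. x - _"] sum.delta cong: if_cong)
    also have "\<dots> = (\<Sum>i<n. 4*real n * (a i)^2 + 2 * (real n)^2)"
      by (intro sum.cong refl) (simp add: algebra_simps power2_eq_square eval_nat_numeral)
    also have "\<dots> = 2*real n^3 + 4*real n*(\<Sum>i<n. (a i)^2)"
      by (simp add: sum.distrib sum_distrib_left eval_nat_numeral algebra_simps)
    finally show ?thesis .
  qed
  have "P.prob {Z \<in> space (null_law n). s \<le> \<bar>W Z - (\<integral>Z. W Z \<partial>null_law n)\<bar>} \<le> P.variance W / s^2"
    by (rule P.Chebyshev_inequality) (use intW intW2 s in auto)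
  then have "P.prob {Z \<in> space (null_law n). s \<le> \<bar>W Z - (\<integral>Z. W Z \<partial>null_law n)\<bar>} \<le> (2*real n^3 + 4*real n*(\<Sum>i<n. (a i)^2)) / s^2"
    unfolding var .
  then show ?thesis unfolding EW unfolding W_def X_def by simp
qed


lemma null_tails:
  fixes a :: "nat \<Rightarrow> real" assumes n: "n \<ge> 1" and s: "s > 0"
  defines "W \<equiv> \<lambda>Z. (\<Sum>i<n. (a i + (\<Sum>j<n. Z (i,j)))^2)"
  defines "A \<equiv> (\<Sum>i<n. (a i)^2)"
  shows "measure (null_law n) {Z \<in> space (null_law n). W Z \<le> real n^2 + A - s}
           \<le> (2*real n^3 + 4*real n*A) / s^2"
    and "measure (null_law n) {Z \<in> space (null_law n). W Z < real n^2 + A + s}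
           \<ge> 1 - (2*real n^3 + 4*real n*A) / s^2"
proof -
  interpret P: prob_space "null_law n" by (rule prob_null)
  let ?B = "{Z \<in> space (null_law n). s \<le> \<bar>W Z - (real n^2 + A)\<bar>}"
  have cheb: "measure (null_law n) ?B \<le> (2*real n^3 + 4*real n*A) / s^2"
    unfolding W_def A_def by (rule null_W_cheb[OF n s])
  have mW: "W \<in> borel_measurable (null_law n)"
    unfolding W_def null_law_def by measurable (auto simp: idx_def)
  have Bm: "?B \<in> sets (null_law n)" using mW by measurable
  have "measure (null_law n) {Z \<in> space (null_law n). W Z \<le> real n^2 + A - s} \<le> measure (null_law n) ?B"
    by (rule P.finite_measure_mono[OF _ Bm]) auto
  then show "measure (null_law n) {Z \<in> space (null_law n). W Z \<le> real n^2 + A - s}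
           \<le> (2*real n^3 + 4*real n*A) / s^2" using cheb by linarith
  have "measure (null_law n) (space (null_law n) - ?B) \<le> measure (null_law n) {Z \<in> space (null_law n). W Z < real n^2 + A + s}"
    using mW by (intro P.finite_measure_mono) auto
  moreover have "measure (null_law n) (space (null_law n) - ?B) = 1 - measure (null_law n) ?B"
    by (rule P.prob_compl[OF Bm])
  ultimately show "measure (null_law n) {Z \<in> space (null_law n). W Z < real n^2 + A + s}
           \<ge> 1 - (2*real n^3 + 4*real n*A) / s^2" using cheb by linarith
qed


lemma prob_spike: "prob_space (spike_law n \<rho>)"
  unfolding spike_law_def by (intro prob_space_PiM prob_space_measure_pmf)

lemma spike_comp_meas:
  assumes "k < n" shows "(\<lambda>v. v k) \<in> measurable (spike_law n \<rho>) (count_space UNIV)"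
proof -
  have "(\<lambda>v. v k) \<in> measurable (spike_law n \<rho>) (measure_pmf (bernoulli_pmf \<rho>))"
    unfolding spike_law_def by (rule measurable_component_singleton) (simp add: assms)
  then show ?thesis
    using measurable_cong_sets[OF refl, of "measure_pmf (bernoulli_pmf \<rho>)" "count_space UNIV" "spike_law n \<rho>"]
    by simp
qed

lemma spike_pair_prob:
  assumes r: "0 \<le> \<rho>" "\<rho> \<le> 1" and ij: "i < n" "j < n"
  shows "measure (spike_law n \<rho>) {v \<in> space (spike_law n \<rho>). v i \<and> v j} = (if i = j then \<rho> else \<rho>^2)"
proof -
  interpret PP: product_prob_space "\<lambda>_. measure_pmf (bernoulli_pmf \<rho>)" "{..<n}"
    by (intro product_prob_spaceI prob_space_measure_pmf)
  have e: "{v \<in> space (spike_law n \<rho>). v i \<and> v j} =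
      {x \<in> space (PiM {..<n} (\<lambda>_. measure_pmf (bernoulli_pmf \<rho>))). \<forall>k\<in>{i,j}. x k \<in> {True}}"
    unfolding spike_law_def by auto
  have "emeasure (spike_law n \<rho>) {v \<in> space (spike_law n \<rho>). v i \<and> v j}
      = (\<Prod>k\<in>{i,j}. emeasure (measure_pmf (bernoulli_pmf \<rho>)) {True})"
    unfolding e using ij unfolding spike_law_def by (intro PP.emeasure_PiM_Collect) auto
  also have "\<dots> = ennreal (if i = j then \<rho> else \<rho>^2)"
    using r by (simp add: emeasure_pmf_single power2_eq_square ennreal_mult)
  finally show ?thesis
    using r by (simp add: measure_def)
qed

lemma mean_vvT_eq:
  assumes r: "0 \<le> \<rho>" "\<rho> \<le> 1" and ij: "i < n" "j < n"
  shows "mean_vvT n \<rho> i j = (if i = j then \<rho> else \<rho>^2)"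
proof -
  interpret P: prob_space "spike_law n \<rho>" by (rule prob_spike)
  let ?S = "{v \<in> space (spike_law n \<rho>). v i \<and> v j}"
  have Sm: "?S \<in> sets (spike_law n \<rho>)"
    using spike_comp_meas[OF ij(1), of \<rho>] spike_comp_meas[OF ij(2), of \<rho>] by measurable
  have "mean_vvT n \<rho> i j = (\<integral>v. indicator ?S v \<partial>spike_law n \<rho>)"
    unfolding mean_vvT_def by (intro Bochner_Integration.integral_cong) (auto simp: indicator_def)
  also have "\<dots> = measure (spike_law n \<rho>) ?S" using Sm by simp
  finally show ?thesis using spike_pair_prob[OF r ij] by simp
qed


lemma sum_delta_sq: "(\<Sum>j<n. \<Sum>k<n. (if j = k then (\<rho>::real) else \<rho>^2)) = real n * \<rho> + (real n^2 - real n) * \<rho>^2"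
proof -
  have "(\<Sum>j<n. \<Sum>k<n. (if j = k then (\<rho>::real) else \<rho>^2)) = (\<Sum>j<n. \<Sum>k<n. (\<rho>^2 + (if j = k then \<rho> - \<rho>^2 else 0)))"
    by (intro sum.cong refl) auto
  also have "\<dots> = (\<Sum>j<n. real n * \<rho>^2 + (\<rho> - \<rho>^2))"
    by (simp add: sum.distrib)
  also have "\<dots> = real n * \<rho> + (real n^2 - real n) * \<rho>^2"
    by (simp add: power2_eq_square algebra_simps)
  finally show ?thesis .
qed

lemma spike_K_cheb:
  assumes r: "0 \<le> \<rho>" "\<rho> \<le> 1" and d: "d > 0"
  shows "measure (spike_law n \<rho>) {v \<in> space (spike_law n \<rho>). d \<le> \<bar>(\<Sum>j<n. of_bool (v j)) - real n * \<rho>\<bar>}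
     \<le> real n * \<rho> * (1 - \<rho>) / d^2"
proof -
  interpret P: prob_space "spike_law n \<rho>" by (rule prob_spike)
  define K where "K v = (\<Sum>j<n. (of_bool (v j) :: real))" for v
  have mb: "(\<lambda>v. of_bool (v j) :: real) \<in> borel_measurable (spike_law n \<rho>)" if "j < n" for j
    using spike_comp_meas[OF that, of \<rho>] by measurable
  have ib: "integrable (spike_law n \<rho>) (\<lambda>v. of_bool (v j) :: real)" if "j < n" for j
    by (rule P.integrable_const_bound[where B=1]) (auto intro: mb that)
  have ibb: "integrable (spike_law n \<rho>) (\<lambda>v. (of_bool (v j) :: real) * of_bool (v k))" if "j < n" "k < n" for j k
    by (rule P.integrable_const_bound[where B=1]) (auto intro!: borel_measurable_times mb that)
  have Eb: "(\<integral>v. (of_bool (v j) :: real) \<partial>spike_law n \<rho>) = \<rho>" if "j < n" for j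
  proof -
    have e: "(\<lambda>v. (of_bool (v j)::real) * of_bool (v j)) = (\<lambda>v. of_bool (v j))" by (auto simp: fun_eq_iff)
    show ?thesis using mean_vvT_eq[OF r that that] unfolding mean_vvT_def e by simp
  qed
  have Ebb: "(\<integral>v. (of_bool (v j) :: real) * of_bool (v k) \<partial>spike_law n \<rho>) = (if j = k then \<rho> else \<rho>^2)"
    if "j < n" "k < n" for j k
    using mean_vvT_eq[OF r that] unfolding mean_vvT_def by simp
  have iK: "integrable (spike_law n \<rho>) K" unfolding K_def by (intro Bochner_Integration.integrable_sum) (auto intro: ib)
  have sq: "(K v)^2 = (\<Sum>j<n. \<Sum>k<n. (of_bool (v j) :: real) * of_bool (v k))" for v
    unfolding K_def power2_eq_square by (rule sum_product)
  have iK2: "integrable (spike_law n \<rho>) (\<lambda>v. (K v)^2)" unfolding sq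
    by (intro Bochner_Integration.integrable_sum) (auto intro: ibb)
  have EK: "(\<integral>v. K v \<partial>spike_law n \<rho>) = real n * \<rho>"
    unfolding K_def by (subst Bochner_Integration.integral_sum) (auto intro: ib simp: Eb)
  have EK2: "(\<integral>v. (K v)^2 \<partial>spike_law n \<rho>) = real n * \<rho> + (real n^2 - real n) * \<rho>^2"
  proof -
    have "(\<integral>v. (K v)^2 \<partial>spike_law n \<rho>) = (\<integral>v. (\<Sum>j<n. \<Sum>k<n. (of_bool (v j) :: real) * of_bool (v k)) \<partial>spike_law n \<rho>)"
      unfolding sq ..
    also have "\<dots> = (\<Sum>j<n. \<integral>v. (\<Sum>k<n. (of_bool (v j) :: real) * of_bool (v k)) \<partial>spike_law n \<rho>)"
      by (rule Bochner_Integration.integral_sum) (intro Bochner_Integration.integrable_sum ibb, auto)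
    also have "\<dots> = (\<Sum>j<n. \<Sum>k<n. \<integral>v. (of_bool (v j) :: real) * of_bool (v k) \<partial>spike_law n \<rho>)"
      by (intro sum.cong refl Bochner_Integration.integral_sum) (auto intro: ibb)
    also have "\<dots> = (\<Sum>j<n. \<Sum>k<n. (if j = k then \<rho> else \<rho>^2))"
      by (intro sum.cong refl) (simp add: Ebb)
    finally show ?thesis using sum_delta_sq by simp
  qed
  have var: "P.variance K = real n * \<rho> * (1 - \<rho>)"
  proof -
    have "P.variance K = (\<integral>v. (K v)^2 \<partial>spike_law n \<rho>) - (\<integral>v. K v \<partial>spike_law n \<rho>)^2"
      by (rule P.variance_eq[OF iK iK2])
    also have "\<dots> = real n * \<rho> * (1 - \<rho>)" unfolding EK EK2 by (simp add: power2_eq_square algebra_simps)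
    finally show ?thesis .
  qed
  have mK: "K \<in> borel_measurable (spike_law n \<rho>)" using iK by auto
  have "P.prob {v \<in> space (spike_law n \<rho>). d \<le> \<bar>K v - (\<integral>v. K v \<partial>spike_law n \<rho>)\<bar>} \<le> P.variance K / d^2"
    by (rule P.Chebyshev_inequality) (use mK iK2 d in auto)
  then have "P.prob {v \<in> space (spike_law n \<rho>). d \<le> \<bar>K v - (\<integral>v. K v \<partial>spike_law n \<rho>)\<bar>} \<le> real n * \<rho> * (1 - \<rho>) / d^2"
    unfolding var .
  then have "P.prob {v \<in> space (spike_law n \<rho>). d \<le> \<bar>K v - real n * \<rho>\<bar>} \<le> real n * \<rho> * (1 - \<rho>) / d^2"
    unfolding EK .
  then show ?thesis unfolding K_def .
qed


definition avec :: "nat \<Rightarrow> real \<Rightarrow> real \<Rightarrow> (nat \<Rightarrow> bool) \<Rightarrow> nat \<Rightarrow> real" where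
  "avec n \<rho> lam v i = lam * (\<Sum>j<n. of_bool (v i) * of_bool (v j) - mean_vvT n \<rho> i j)"

definition Wst :: "nat \<Rightarrow> (nat \<Rightarrow> real) \<Rightarrow> (nat \<times> nat \<Rightarrow> real) \<Rightarrow> real" where
  "Wst n a Z = (\<Sum>i<n. (a i + (\<Sum>j<n. Z (i,j)))^2)"

definition gmap :: "nat \<Rightarrow> real \<Rightarrow> real \<Rightarrow> (nat \<Rightarrow> bool) \<times> (nat \<times> nat \<Rightarrow> real) \<Rightarrow> (nat \<times> nat \<Rightarrow> real)" where
  "gmap n \<rho> lam = (\<lambda>(v, Z). \<lambda>(i,j)\<in>idx n.
          lam * (of_bool (v i) * of_bool (v j) - mean_vvT n \<rho> i j) + Z (i,j))"

lemma planted_gmap: "planted_law n \<rho> lam = distr (spike_law n \<rho> \<Otimes>\<^sub>M null_law n) (PiM (idx n) (\<lambda>_. borel)) (gmap n \<rho> lam)"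
  unfolding planted_law_def gmap_def ..

lemma stat_gmap: "row_sum_stat n (gmap n \<rho> lam (v, Z)) = Wst n (avec n \<rho> lam v) Z"
proof -
  have "(\<Sum>j<n. gmap n \<rho> lam (v, Z) (i,j)) = avec n \<rho> lam v i + (\<Sum>j<n. Z (i,j))" if "i < n" for i
    using that by (simp add: gmap_def avec_def idx_def sum.distrib sum_distrib_left sum_subtractf algebra_simps)
  then show ?thesis unfolding row_sum_stat_def Wst_def by (intro sum.cong refl) simp
qed

lemma spike_comp_meas2[measurable]:
  "k < n \<Longrightarrow> (\<lambda>x. fst x k) \<in> measurable (spike_law n \<rho> \<Otimes>\<^sub>M N) (count_space UNIV)"
  by (rule measurable_compose[OF measurable_fst spike_comp_meas])

lemma null_comp_meas:
  assumes "i < n" "j < n" shows "(\<lambda>Z. Z (i,j)) \<in> borel_measurable (null_law n)"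
proof -
  have "(\<lambda>Z. Z (i,j)) \<in> measurable (null_law n) stdN"
    unfolding null_law_def by (rule measurable_component_singleton) (simp add: assms idx_def)
  then show ?thesis
    using measurable_cong_sets[OF refl, of stdN borel "null_law n"] by simp
qed

lemma null_comp_meas2[measurable]:
  "i < n \<Longrightarrow> j < n \<Longrightarrow> (\<lambda>x. snd x (i,j)) \<in> borel_measurable (M \<Otimes>\<^sub>M null_law n)"
  by (rule measurable_compose[OF measurable_snd null_comp_meas])

lemma gmap_meas: "gmap n \<rho> lam \<in> measurable (spike_law n \<rho> \<Otimes>\<^sub>M null_law n) (PiM (idx n) (\<lambda>_. borel))"
proof -
  have "(\<lambda>x. \<lambda>p\<in>idx n. lam * (of_bool (fst x (fst p)) * of_bool (fst x (snd p)) - mean_vvT n \<rho> (fst p) (snd p)) + snd x (fst p, snd p))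
     \<in> measurable (spike_law n \<rho> \<Otimes>\<^sub>M null_law n) (PiM (idx n) (\<lambda>_. borel))"
    by (rule measurable_restrict) (auto simp: idx_def)
  moreover have "gmap n \<rho> lam = (\<lambda>x. \<lambda>p\<in>idx n. lam * (of_bool (fst x (fst p)) * of_bool (fst x (snd p)) - mean_vvT n \<rho> (fst p) (snd p)) + snd x (fst p, snd p))"
    by (auto simp: gmap_def fun_eq_iff split: prod.splits)
  ultimately show ?thesis by simp
qed

lemma Wst_meas: "(\<lambda>x. Wst n (avec n \<rho> lam (fst x)) (snd x)) \<in> borel_measurable (spike_law n \<rho> \<Otimes>\<^sub>M null_law n)"
  unfolding Wst_def avec_def by measurable


lemma D3:
  fixes r t A :: real
  assumes r: "r > 0" and t: "t > 0" and tr: "4 * t \<le> sqrt 2 * r"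
    and A: "A \<ge> 3 * (sqrt 2 * t * r^3)"
  shows "(2 * (r^2)^3 + 4 * r^2 * A) / (A - sqrt 2 * t * r^3)^2 \<le> 1 / t^2"
proof -
  define s where "s = sqrt 2 * t * r^3"
  define x where "x = A - s"
  have s0: "s > 0" unfolding s_def using r t by simp
  have x2: "x \<ge> 2 * s" unfolding x_def s_def using A by linarith
  have x0: "x > 0" using x2 s0 by simp
  have ss: "s^2 = t^2 * (2 * (r^2)^3)"
    unfolding s_def by (simp add: power_mult_distrib power2_eq_square eval_nat_numeral)
  have xx: "4 * s^2 \<le> x^2"
  proof -
    have "(2 * s)^2 \<le> x^2" using x2 s0 by (intro power_mono) auto
    then show ?thesis by (simp add: power_mult_distrib)
  qed
  have key: "t^2 * (4 * r^2) \<le> s"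
  proof -
    have "(4 * t) * r^2 \<le> (sqrt 2 * r) * r^2" using tr by (intro mult_right_mono) auto
    then have "t * ((4 * t) * r^2) \<le> t * ((sqrt 2 * r) * r^2)" using t by (intro mult_left_mono) auto
    then show ?thesis unfolding s_def by (simp add: power2_eq_square eval_nat_numeral algebra_simps)
  qed
  have h2: "t^2 * (4 * r^2) * s \<le> s * s" using key s0 by (intro mult_right_mono) auto
  have h3: "t^2 * (4 * r^2) * x \<le> s * x" using key x0 by (intro mult_right_mono) auto
  have h4: "s * x \<le> x * x / 2" using x2 x0 by (simp add: field_simps mult_right_mono)
  have A': "A = s + x" unfolding x_def by simp
  have "t^2 * (2 * (r^2)^3 + 4 * r^2 * A) = s^2 + t^2 * (4 * r^2) * s + t^2 * (4 * r^2) * x"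
    unfolding A' ss by (simp add: algebra_simps)
  also have "\<dots> \<le> x^2" using h2 h3 h4 xx by (simp add: power2_eq_square)
  finally have "t^2 * (2 * (r^2)^3 + 4 * r^2 * A) \<le> x^2" .
  then show ?thesis unfolding x_def[symmetric] s_def[symmetric] using x0 t
    by (simp add: divide_le_eq field_simps)
qed


lemma D2poly:
  fixes N \<rho> :: real
  assumes N: "N \<ge> 24" and \<rho>: "0 < \<rho>" "\<rho> < 1/8"
  shows "(N/2) * (N/2 - 1 - N*\<rho>)^2 \<ge> (3/4) * (1/8 - \<rho>) * N^3"
proof -
  define U where "U = 1/2 - \<rho> - 1/N"
  have N0: "N > 0" using N by simp
  have e: "N/2 - 1 - N*\<rho> = N * U" unfolding U_def using N0 by (simp add: field_simps)
  have e2: "1/8 - \<rho> = U - 3/8 + 1/N" unfolding U_def by simp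
  have iN: "1/N > 0" using N0 by simp
  have U: "U \<le> 1/2" unfolding U_def using \<rho> iN by linarith
  have "(3/4 - U)^2 \<ge> (1/4)^2" using U by (intro power_mono) auto
  moreover have "3 / (2*N) \<le> 1/16" using N by (simp add: field_simps)
  ultimately have q: "U^2/2 - (3/4) * (U - 3/8 + 1/N) \<ge> 0"
    by (simp add: power2_eq_square field_simps) 
  have "(N/2) * (N/2 - 1 - N*\<rho>)^2 - (3/4) * (1/8 - \<rho>) * N^3 = N^3 * (U^2/2 - (3/4) * (U - 3/8 + 1/N))"
    unfolding e e2 by (simp add: power2_eq_square eval_nat_numeral algebra_simps)
  also have "\<dots> \<ge> 0" using q N0 by simp
  finally show ?thesis by simp
qed

lemma D2:
  fixes N \<rho> K t lam r :: real
  assumes N: "N \<ge> 24" and r: "r > 0" "r^2 = N" and \<rho>: "0 < \<rho>" "\<rho> < 1/8"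
    and K: "K \<ge> N*\<rho>/2" and t: "t > 0" and lam: "lam^2 \<ge> 4* sqrt 2*t / ((1/8-\<rho>)*\<rho>^3*r^3)"
  shows "K * (lam*(K - (\<rho> + (N-1)*\<rho>^2)))^2 \<ge> 3*(sqrt 2*t*r^3)"
proof -
  let ?c = "\<rho> + (N-1)*\<rho>^2"
  have N0: "N > 0" using N by simp
  have p1: "N*\<rho>/2 - ?c \<ge> \<rho> * (N/2 - 1 - N*\<rho>)" by (simp add: algebra_simps power2_eq_square)
  have p1': "N/2 - 1 - N*\<rho> \<ge> 0"
  proof -
    have "N*\<rho> \<le> N/8" using \<rho> N0 by simp
    then show ?thesis using N by linarith
  qed
  have K0: "K \<ge> 0" using K mult_pos_pos[OF N0 \<rho>(1)] by linarith
  have base: "\<rho> * (N/2 - 1 - N*\<rho>) \<ge> 0" using p1' \<rho> by simp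
  have Kc: "K - ?c \<ge> \<rho> * (N/2 - 1 - N*\<rho>)" using p1 K by linarith
  have "(K - ?c)^2 \<ge> (\<rho> * (N/2 - 1 - N*\<rho>))^2" using Kc base by (intro power_mono) auto
  moreover have "K \<ge> N*\<rho>/2" by (rule K)
  ultimately have "K * (K - ?c)^2 \<ge> (N*\<rho>/2) * (\<rho> * (N/2 - 1 - N*\<rho>))^2"
    using N0 \<rho> K0 by (intro mult_mono) auto
  moreover have "(N*\<rho>/2) * (\<rho> * (N/2 - 1 - N*\<rho>))^2 = \<rho>^3 * ((N/2) * (N/2 - 1 - N*\<rho>)^2)"
    by (simp add: power2_eq_square eval_nat_numeral algebra_simps)
  moreover have "\<rho>^3 * ((N/2) * (N/2 - 1 - N*\<rho>)^2) \<ge> \<rho>^3 * ((3/4) * (1/8 - \<rho>) * N^3)"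
    using D2poly[OF N \<rho>] \<rho> by (intro mult_left_mono) auto
  ultimately have KK: "K * (K - ?c)^2 \<ge> \<rho>^3 * ((3/4) * (1/8 - \<rho>) * N^3)" by linarith
  have pos: "(1/8-\<rho>)*\<rho>^3*r^3 > 0" using \<rho> r by simp
  have E1: "K * (lam*(K - ?c))^2 = lam^2 * (K * (K - ?c)^2)" by (simp add: power_mult_distrib)
  have E2: "lam^2 * (K * (K - ?c)^2) \<ge> (4* sqrt 2*t / ((1/8-\<rho>)*\<rho>^3*r^3)) * (\<rho>^3 * ((3/4) * (1/8 - \<rho>) * N^3))"
    by (rule mult_mono[OF lam KK]) (use \<rho> N0 in auto)
  have E3: "(4* sqrt 2*t / ((1/8-\<rho>)*\<rho>^3*r^3)) * (\<rho>^3 * ((3/4) * (1/8 - \<rho>) * N^3)) = 3*(sqrt 2*t*r^3)"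
  proof -
    have N3: "N^3 = r^3 * r^3" using r(2) by (simp flip: r(2) add: power2_eq_square eval_nat_numeral)
    show ?thesis unfolding N3 using pos \<rho> r by (simp add: field_simps)
  qed
  show ?thesis using E1 E2 E3 by linarith
qed


lemma sum_mean:
  assumes r: "0 \<le> \<rho>" "\<rho> \<le> 1" and i: "i < n"
  shows "(\<Sum>j<n. mean_vvT n \<rho> i j) = \<rho> + (real n - 1) * \<rho>^2"
proof -
  have "(\<Sum>j<n. mean_vvT n \<rho> i j) = (\<Sum>j<n. \<rho>^2 + (if i = j then \<rho> - \<rho>^2 else 0))"
    by (intro sum.cong refl) (use mean_vvT_eq[OF r i] in auto)
  also have "\<dots> = real n * \<rho>^2 + (\<rho> - \<rho>^2)" using i by (simp add: sum.distrib)
  finally show ?thesis by (simp add: algebra_simps)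
qed

lemma A_lower:
  assumes r: "0 \<le> \<rho>" "\<rho> \<le> 1"
  shows "(\<Sum>i<n. (avec n \<rho> lam v i)^2) \<ge>
    (\<Sum>j<n. of_bool (v j)) * (lam * ((\<Sum>j<n. of_bool (v j)) - (\<rho> + (real n - 1) * \<rho>^2)))^2"
proof -
  define K :: real where "K = (\<Sum>j<n. of_bool (v j))"
  define c where "c = \<rho> + (real n - 1) * \<rho>^2"
  have each: "of_bool (v i) * (lam * (K - c))^2 \<le> (avec n \<rho> lam v i)^2" if "i < n" for i
  proof (cases "v i")
    case True
    have "avec n \<rho> lam v i = lam * ((\<Sum>j<n. of_bool (v j)) - (\<Sum>j<n. mean_vvT n \<rho> i j))"
      unfolding avec_def using True by (simp add: sum_subtractf)
    then have "avec n \<rho> lam v i = lam * (K - c)"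
      unfolding K_def c_def sum_mean[OF r that] .
    then show ?thesis using True by simp
  qed simp
  have "(\<Sum>i<n. of_bool (v i) * (lam * (K - c))^2) \<le> (\<Sum>i<n. (avec n \<rho> lam v i)^2)"
    by (intro sum_mono each) simp
  moreover have "(\<Sum>i<n. of_bool (v i) * (lam * (K - c))^2) = K * (lam * (K - c))^2"
    unfolding K_def by (simp only: sum_distrib_right)
  ultimately show ?thesis unfolding K_def c_def by simp
qed


lemma planted_bound:
  assumes e: "e \<ge> 0"
    and good: "\<And>v. v \<in> space (spike_law n \<rho>) \<Longrightarrow> v \<notin> Bd \<Longrightarrow>
        measure (null_law n) {Z \<in> space (null_law n). Wst n (avec n \<rho> lam v) Z \<le> \<tau>} \<le> e"
    and Bd: "Bd \<in> sets (spike_law n \<rho>)" "measure (spike_law n \<rho>) Bd \<le> e'"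
  shows "measure (planted_law n \<rho> lam) {Y \<in> space (planted_law n \<rho> lam). row_sum_stat n Y > \<tau>} \<ge> 1 - (e' + e)"
proof -
  interpret S: prob_space "spike_law n \<rho>" by (rule prob_spike)
  interpret N: prob_space "null_law n" by (rule prob_null)
  interpret SN: pair_prob_space "spike_law n \<rho>" "null_law n" ..
  let ?M = "spike_law n \<rho> \<Otimes>\<^sub>M null_law n"
  let ?F = "\<lambda>x. Wst n (avec n \<rho> lam (fst x)) (snd x)"
  have mF: "?F \<in> borel_measurable ?M" by (rule Wst_meas)
  have statm: "row_sum_stat n \<in> borel_measurable (PiM (idx n) (\<lambda>_. borel))"
    unfolding row_sum_stat_def by measurable (auto simp: idx_def)
  define B where "B = {x \<in> space ?M. ?F x \<le> \<tau>}"
  have Bm: "B \<in> sets ?M" unfolding B_def using mF by measurable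
  have "measure (planted_law n \<rho> lam) {Y \<in> space (planted_law n \<rho> lam). row_sum_stat n Y > \<tau>}
      = measure ?M (gmap n \<rho> lam -` {Y \<in> space (PiM (idx n) (\<lambda>_. borel)). row_sum_stat n Y > \<tau>} \<inter> space ?M)"
    unfolding planted_gmap using statm
    by (subst measure_distr[OF gmap_meas]) auto
  also have "gmap n \<rho> lam -` {Y \<in> space (PiM (idx n) (\<lambda>_. borel)). row_sum_stat n Y > \<tau>} \<inter> space ?M
      = space ?M - B"
  proof -
    have "gmap n \<rho> lam x \<in> space (PiM (idx n) (\<lambda>_. borel))" if "x \<in> space ?M" for x
      using measurable_space[OF gmap_meas that] .
    then show ?thesis unfolding B_def using stat_gmap
      by (auto simp: not_le)
  qed
  also have "measure ?M (space ?M - B) = 1 - measure ?M B" by (rule SN.prob_compl[OF Bm])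
  finally have eq: "measure (planted_law n \<rho> lam) {Y \<in> space (planted_law n \<rho> lam). row_sum_stat n Y > \<tau>}
      = 1 - measure ?M B" .
  have slice: "Pair v -` B = {Z \<in> space (null_law n). Wst n (avec n \<rho> lam v) Z \<le> \<tau>}"
    if "v \<in> space (spike_law n \<rho>)" for v
    using that unfolding B_def by (auto simp: space_pair_measure)
  have pt: "emeasure (null_law n) (Pair v -` B) \<le> indicator Bd v + ennreal e"
    if v: "v \<in> space (spike_law n \<rho>)" for v
  proof (cases "v \<in> Bd")
    case True
    have "emeasure (null_law n) (Pair v -` B) \<le> 1" by (rule N.emeasure_le_1)
    also have "\<dots> \<le> indicator Bd v + ennreal e" using True by simp
    finally show ?thesis .
  next
    case False
    have "emeasure (null_law n) (Pair v -` B) = ennreal (measure (null_law n) (Pair v -` B))"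
      by (rule N.emeasure_eq_measure)
    also have "\<dots> \<le> ennreal e" unfolding slice[OF v] using good[OF v False] by (rule ennreal_leI)
    also have "\<dots> \<le> indicator Bd v + ennreal e" by simp
    finally show ?thesis .
  qed
  have "emeasure ?M B = (\<integral>\<^sup>+v. emeasure (null_law n) (Pair v -` B) \<partial>spike_law n \<rho>)"
    by (rule N.emeasure_pair_measure_alt[OF Bm])
  also have "\<dots> \<le> (\<integral>\<^sup>+v. (indicator Bd v + ennreal e) \<partial>spike_law n \<rho>)"
    by (intro nn_integral_mono pt)
  also have "\<dots> = emeasure (spike_law n \<rho>) Bd + ennreal e"
    using Bd(1) by (simp add: nn_integral_add S.emeasure_space_1)
  also have "\<dots> = ennreal (measure (spike_law n \<rho>) Bd + e)"
    using e by (simp add: S.emeasure_eq_measure ennreal_plus)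
  finally have "emeasure ?M B \<le> ennreal (measure (spike_law n \<rho>) Bd + e)" .
  then have "measure ?M B \<le> measure (spike_law n \<rho>) Bd + e"
    using e by (simp add: SN.emeasure_eq_measure ennreal_plus[symmetric] ennreal_le_iff add_nonneg_nonneg del: ennreal_plus)
  then show ?thesis using eq Bd(2) by linarith
qed


lemma powr32: "x > 0 \<Longrightarrow> (x::real) powr (3/2) = sqrt x ^ 3"
proof -
  assume x: "x > 0"
  have "x powr (3/2) = x powr (1 + 1/2)" by simp
  also have "\<dots> = x powr 1 * x powr (1/2)" by (rule powr_add)
  also have "\<dots> = x * sqrt x" using x by (simp add: powr_half_sqrt)
  also have "x * sqrt x = sqrt x ^ 2 * sqrt x" using x by simp
  also have "\<dots> = sqrt x ^ 3" by (simp add: eval_nat_numeral)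
  finally show ?thesis .
qed

lemma powrm32: "y > 0 \<Longrightarrow> ((y::real) powr (-3/2))^2 = 1 / y^3"
proof -
  assume y: "y > 0"
  have "(y powr (-3/2))^2 = y powr (-3/2) * y powr (-3/2)" by (simp add: power2_eq_square)
  also have "\<dots> = y powr (-3/2 + -3/2)" by (rule powr_add[symmetric])
  also have "\<dots> = y powr (- 3)" by simp
  also have "\<dots> = 1 / y powr 3" by (rule powr_minus_divide)
  also have "y powr 3 = y ^ 3" using y powr_realpow[of y 3] by simp
  finally show ?thesis .
qed

lemma K_meas: "(\<lambda>v. \<Sum>j<n. (of_bool (v j) :: real)) \<in> borel_measurable (spike_law n \<rho>)"
proof -
  have "(\<lambda>v. of_bool (v j) :: real) \<in> borel_measurable (spike_law n \<rho>)" if "j \<in> {..<n}" for j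
    using spike_comp_meas[of j n \<rho>] that by simp measurable
  then show ?thesis by (rule borel_measurable_sum)
qed

theorem mainTheorem16:
  fixes n :: nat and \<rho> lam t :: real
  assumes "1 / real n \<le> \<rho>" and "\<rho> < 1/8"
    and "lam \<ge> 0"
    and "0 < t"
    and "t \<le> min ((1/2) * sqrt (\<rho> * real n)) ((sqrt 2 / 18) * (1/8 - \<rho>) * sqrt (real n))"
    and "lam \<ge> sqrt (4 * sqrt 2 * t / (1/8 - \<rho>)) * (\<rho> * sqrt (real n)) powr (-3/2)"
  shows "(measure (null_law n)
           {Y \<in> space (null_law n). row_sum_stat n Y < real n ^ 2 + t * sqrt 2 * real n powr (3/2)}
           \<ge> 1 - 1 / t^2) \<and>
         (measure (planted_law n \<rho> lam)
           {Y \<in> space (planted_law n \<rho> lam). row_sum_stat n Y > real n ^ 2 + t * sqrt 2 * real n powr (3/2)}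
           \<ge> 1 - 2 / t^2)"
proof -
  note t0 = assms(4)
  have t1: "t \<le> (1/2) * sqrt (\<rho> * real n)" and t2: "t \<le> (sqrt 2 / 18) * (1/8 - \<rho>) * sqrt (real n)"
    using assms(5) by auto
  have rn0: "\<rho> * real n > 0"
  proof -
    have "0 < (1/2) * sqrt (\<rho> * real n)" using t0 t1 by linarith
    then show ?thesis by simp
  qed
  have n0: "real n > 0"
  proof (rule ccontr)
    assume "\<not> real n > 0" then have "n = 0" by simp
    then show False using rn0 by simp
  qed
  then have n1: "n \<ge> 1" by simp
  have \<rho>0: "\<rho> > 0" using rn0 n0 by (simp add: zero_less_mult_iff)
  have \<rho>1: "\<rho> < 1/8" by (rule assms(2))
  define r where "r = sqrt (real n)"
  have r0: "r > 0" unfolding r_def using n0 by simp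
  have r2: "r^2 = real n" unfolding r_def using n0 by simp
  have np: "real n powr (3/2) = r^3" unfolding r_def by (rule powr32[OF n0])
  define s where "s = sqrt 2 * t * r^3"
  have s0: "s > 0" unfolding s_def using t0 r0 by simp
  have tau: "real n ^ 2 + t * sqrt 2 * real n powr (3/2) = real n^2 + s"
    unfolding np s_def by simp
  have ss: "s^2 = t^2 * (2 * (real n)^3)"
    unfolding s_def r2[symmetric] by (simp add: power_mult_distrib power2_eq_square eval_nat_numeral)
  have st: "2 * real n ^ 3 / s^2 = 1 / t^2"
    unfolding ss using n0 t0 by (simp add: field_simps)
  have stat0: "Wst n (\<lambda>_. 0) Z = row_sum_stat n Z" for Z
    unfolding Wst_def row_sum_stat_def by simp
  have part1: "measure (null_law n)
           {Y \<in> space (null_law n). row_sum_stat n Y < real n ^ 2 + t * sqrt 2 * real n powr (3/2)}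
           \<ge> 1 - 1 / t^2"
  proof -
    have "measure (null_law n) {Z \<in> space (null_law n). Wst n (\<lambda>_. 0) Z < real n^2 + (\<Sum>i<n. ((\<lambda>_. 0::real) i)^2) + s}
           \<ge> 1 - (2*real n^3 + 4*real n*(\<Sum>i<n. ((\<lambda>_. 0::real) i)^2)) / s^2"
      using null_tails(2)[OF n1 s0, of "\<lambda>_. 0"] unfolding Wst_def .
    then show ?thesis unfolding tau stat0 st[symmetric] by simp
  qed
  have part2: "measure (planted_law n \<rho> lam)
           {Y \<in> space (planted_law n \<rho> lam). row_sum_stat n Y > real n ^ 2 + t * sqrt 2 * real n powr (3/2)}
           \<ge> 1 - 2 / t^2"
  proof (cases "t^2 \<le> 2")
    case True
    then have "1 - 2 / t^2 \<le> 0" using t0 by (simp add: field_simps)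
    then show ?thesis using measure_nonneg order_trans by blast
  next
    case False
    then have tt: "t^2 > 2" by simp
    have t144: "t \<le> sqrt 2 * r / 144"
    proof -
      have h: "(1/8 - \<rho>) * (sqrt 2 * r) \<le> (1/8) * (sqrt 2 * r)"
        using \<rho>0 r0 by (intro mult_right_mono) auto
      have e: "(sqrt 2 / 18) * (1/8 - \<rho>) * r = ((1/8 - \<rho>) * (sqrt 2 * r)) / 18" by simp
      have t2': "t \<le> (sqrt 2 / 18) * (1/8 - \<rho>) * r" using t2 unfolding r_def .
      show ?thesis using t2' h unfolding e by linarith
    qed
    have tr: "4 * t \<le> sqrt 2 * r" using t144 r0 t0 by linarith
    have N24: "real n \<ge> 24"
    proof -
      have "t^2 \<le> (sqrt 2 * r / 144)^2" using t144 t0 by (intro power_mono) auto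
      also have "\<dots> = 2 * real n / 20736" unfolding r2[symmetric] by (simp add: power_mult_distrib power_divide)
      finally show ?thesis using tt by simp
    qed
    define d where "d = t * sqrt (\<rho> * real n)"
    have d0: "d > 0" unfolding d_def using t0 rn0 by simp
    have dle: "d \<le> \<rho> * real n / 2"
    proof -
      have "d \<le> (1/2) * sqrt (\<rho> * real n) * sqrt (\<rho> * real n)"
        unfolding d_def using t1 rn0 by (intro mult_right_mono) auto
      also have "\<dots> = \<rho> * real n / 2" using rn0 by simp
      finally show ?thesis .
    qed
    have d2: "d^2 = t^2 * (\<rho> * real n)" unfolding d_def using rn0 by (simp add: power_mult_distrib)
    have lam2: "lam^2 \<ge> 4 * sqrt 2 * t / ((1/8-\<rho>)*\<rho>^3*r^3)"
    proof -
      let ?C = "4 * sqrt 2 * t / (1/8 - \<rho>)"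
      let ?q = "(\<rho> * r) powr (-3/2)"
      have C0: "?C \<ge> 0" using t0 \<rho>1 by simp
      have "(sqrt ?C * ?q)^2 \<le> lam^2"
        using assms(6) C0 unfolding r_def[symmetric] by (intro power_mono) auto
      moreover have "(sqrt ?C * ?q)^2 = ?C * (1 / (\<rho> * r)^3)"
        using C0 powrm32[of "\<rho> * r"] \<rho>0 r0 by (simp add: power_mult_distrib)
      moreover have "?C * (1 / (\<rho> * r)^3) = 4 * sqrt 2 * t / ((1/8-\<rho>)*\<rho>^3*r^3)"
        by (simp add: power_mult_distrib mult.assoc)
      ultimately show ?thesis by linarith
    qed
    define Bd where "Bd = {v \<in> space (spike_law n \<rho>). d \<le> \<bar>(\<Sum>j<n. of_bool (v j)) - real n * \<rho>\<bar>}"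
    have Bdm: "Bd \<in> sets (spike_law n \<rho>)" unfolding Bd_def using K_meas[of n \<rho>] by measurable
    have Bdp: "measure (spike_law n \<rho>) Bd \<le> 1 / t^2"
    proof -
      have "measure (spike_law n \<rho>) Bd \<le> real n * \<rho> * (1 - \<rho>) / d^2"
        unfolding Bd_def using \<rho>0 \<rho>1 d0 by (intro spike_K_cheb) auto
      also have "\<dots> \<le> real n * \<rho> / d^2"
        using \<rho>0 n0 d0 by (intro divide_right_mono) (auto simp: mult_left_le)
      also have "\<dots> = 1 / t^2" unfolding d2 using rn0 t0 n0 \<rho>0 by (simp add: field_simps)
      finally show ?thesis .
    qed
    have good: "measure (null_law n) {Z \<in> space (null_law n). Wst n (avec n \<rho> lam v) Z \<le> real n^2 + s} \<le> 1 / t^2"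
      if v: "v \<in> space (spike_law n \<rho>)" "v \<notin> Bd" for v
    proof -
      define K :: real where "K = (\<Sum>j<n. of_bool (v j))"
      define A where "A = (\<Sum>i<n. (avec n \<rho> lam v i)^2)"
      have "\<bar>K - real n * \<rho>\<bar> < d" using v unfolding Bd_def K_def by auto
      then have K: "K \<ge> real n * \<rho> / 2" using dle by (simp add: abs_less_iff algebra_simps)
      have "A \<ge> K * (lam * (K - (\<rho> + (real n - 1) * \<rho>^2)))^2"
        unfolding A_def K_def using \<rho>0 \<rho>1 by (intro A_lower) auto
      moreover have "K * (lam * (K - (\<rho> + (real n - 1) * \<rho>^2)))^2 \<ge> 3 * (sqrt 2 * t * r^3)"
        by (rule D2[OF N24 r0 r2 \<rho>0 \<rho>1 K t0 lam2])
      ultimately have A3: "A \<ge> 3 * s" unfolding s_def by linarith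
      have As: "A - s > 0" using A3 s0 by linarith
      have "measure (null_law n) {Z \<in> space (null_law n). Wst n (avec n \<rho> lam v) Z \<le> real n^2 + A - (A - s)}
           \<le> (2*real n^3 + 4*real n*A) / (A - s)^2"
        using null_tails(1)[OF n1 As, of "avec n \<rho> lam v"] unfolding Wst_def A_def .
      also have "\<dots> \<le> 1 / t^2"
        using D3[OF r0 t0 tr, of A] A3 unfolding s_def r2 by simp
      finally show ?thesis by simp
    qed
    have "measure (planted_law n \<rho> lam) {Y \<in> space (planted_law n \<rho> lam). row_sum_stat n Y > real n^2 + s}
        \<ge> 1 - (1 / t^2 + 1 / t^2)"
      by (rule planted_bound[OF _ good Bdm Bdp]) auto
    then show ?thesis unfolding tau by simp
  qed
  show ?thesis using part1 part2 by simp
qed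

end
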